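(* Let $f:[0,1]\to\mathbb{R}$ with $f(0),f(1)\in\mathbb{Z}$, let $n\in\mathbb{N}_+$, $n\ge 2$, and let $\Phi_n:[0,1]\to\mathbb{R}$ satisfy \[ \Phi_n\left(\tfrac{k+2}{n}\right)-2\Phi_n\left(\tfrac{k+1}{n}\right)+\Phi_n\left(\tfrac{k}{n}\right)\ge 2\binom{n}{k+1}^{-1},\quad k=0,\dots,n-2. \] If $f(x)+\Phi_n(x)$ is concave on $[0,1]$, then $\widetilde{B}_n(f)$ is concave on $[0,1]$.
   Context: For $n\in\mathbb{N}_+$ and $f:[0,1]\to\mathbb{R}$, $\widetilde{B}_n(f)(x):=\sum_{k=0}^n \left[f\left(\frac{k}{n}\right)\binom{n}{k}\right]x^k(1-x)^{n-k}$, where $[\alpha]$ is the largest integer $\le\alpha$. *)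

theory Defs
  imports "HOL-Analysis.Analysis"
begin

definition tilde_bernstein :: "nat \<Rightarrow> (real \<Rightarrow> real) \<Rightarrow> real \<Rightarrow> real" where
  "tilde_bernstein n f x =
     (\<Sum>k=0..n. real_of_int \<lfloor>f (real k / real n) * real (n choose k)\<rfloor> * x ^ k * (1 - x) ^ (n - k))"

end

theory Submission imports Defs begin
definition bp :: "nat \<Rightarrow> nat \<Rightarrow> real \<Rightarrow> real" where
  "bp m k x = real (m choose k) * x ^ k * (1 - x) ^ (m - k)"

lemma bp_deriv:
  "((\<lambda>x. bp (Suc m) k x) has_real_derivative
     real (Suc m) * ((if k = 0 then 0 else bp m (k - 1) x) - bp m k x)) (at x)"
proof (cases k)
  case 0
  show ?thesis unfolding 0 bp_def
    by (rule derivative_eq_intros refl | simp)+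
next
  case (Suc j)
  have e1: "real (Suc j) * real (Suc m choose Suc j) = real (Suc m) * real (m choose j)"
    by (metis Suc_times_binomial of_nat_mult)
  have e2: "real (m - j) * real (Suc m choose Suc j) = real (Suc m) * real (m choose Suc j)"
    using binomial_absorb_comp[of "Suc m" "Suc j"] by (metis diff_Suc_Suc diff_Suc_1 of_nat_mult)
  have "((\<lambda>x. real (Suc m choose Suc j) * x ^ Suc j * (1 - x) ^ (m - j)) has_real_derivative
     real (Suc m choose Suc j) * (real (Suc j) * x ^ j * (1 - x) ^ (m - j)
       - x ^ Suc j * (real (m - j) * (1 - x) ^ (m - j - 1)))) (at x)"
    by (rule derivative_eq_intros refl | simp)+ (simp add: algebra_simps)
  moreover have "real (Suc m choose Suc j) * (real (Suc j) * x ^ j * (1 - x) ^ (m - j)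
       - x ^ Suc j * (real (m - j) * (1 - x) ^ (m - j - 1)))
     = real (Suc m) * (real (m choose j) * x ^ j * (1 - x) ^ (m - j) - real (m choose Suc j) * x ^ Suc j * (1 - x) ^ (m - Suc j))"
  proof -
    have "real (Suc m choose Suc j) * (real (Suc j) * x ^ j * (1 - x) ^ (m - j)
       - x ^ Suc j * (real (m - j) * (1 - x) ^ (m - j - 1)))
      = (real (Suc j) * real (Suc m choose Suc j)) * x ^ j * (1 - x) ^ (m - j)
       - (real (m - j) * real (Suc m choose Suc j)) * x ^ Suc j * (1 - x) ^ (m - Suc j)"
      by (simp add: algebra_simps)
    also have "\<dots> = real (Suc m) * (real (m choose j) * x ^ j * (1 - x) ^ (m - j) - real (m choose Suc j) * x ^ Suc j * (1 - x) ^ (m - Suc j))"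
      unfolding e1 e2 by (simp add: algebra_simps)
    finally show ?thesis .
  qed
  ultimately show ?thesis unfolding Suc bp_def by simp
qed
definition P :: "nat \<Rightarrow> (nat \<Rightarrow> real) \<Rightarrow> real \<Rightarrow> real" where
  "P m c x = (\<Sum>k=0..m. c k * bp m k x)"

lemma P_deriv:
  "(P (Suc m) c has_real_derivative real (Suc m) * P m (\<lambda>k. c (Suc k) - c k) x) (at x)"
proof -
  have d: "(P (Suc m) c has_real_derivative
     (\<Sum>k=0..Suc m. c k * (real (Suc m) * ((if k = 0 then 0 else bp m (k - 1) x) - bp m k x)))) (at x)"
    unfolding P_def
    by (rule DERIV_sum, rule DERIV_cmult, rule bp_deriv)
  have "(\<Sum>k=0..Suc m. c k * (real (Suc m) * ((if k = 0 then 0 else bp m (k - 1) x) - bp m k x)))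
     = real (Suc m) * ((\<Sum>k=0..Suc m. c k * (if k = 0 then 0 else bp m (k - 1) x))
        - (\<Sum>k=0..Suc m. c k * bp m k x))"
    by (simp add: sum_distrib_left sum_subtractf algebra_simps)
  also have "(\<Sum>k=0..Suc m. c k * (if k = 0 then 0 else bp m (k - 1) x)) = (\<Sum>k=0..m. c (Suc k) * bp m k x)"
    by (subst sum.atLeast0_atMost_Suc_shift) simp
  also have "(\<Sum>k=0..Suc m. c k * bp m k x) = (\<Sum>k=0..m. c k * bp m k x)"
    by (simp add: bp_def)
  also have "(\<Sum>k=0..m. c (Suc k) * bp m k x) - (\<Sum>k=0..m. c k * bp m k x) = P m (\<lambda>k. c (Suc k) - c k) x"
    by (simp add: P_def sum_subtractf algebra_simps)
  finally show ?thesis using d by simp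
qed

lemma bp_nonneg: "0 \<le> x \<Longrightarrow> x \<le> 1 \<Longrightarrow> 0 \<le> bp m k x"
  by (simp add: bp_def)

lemma P_concave:
  assumes "\<And>k. k \<le> m \<Longrightarrow> c (k + 2) - 2 * c (k + 1) + c k \<le> 0"
  shows "concave_on {0..1} (P (Suc (Suc m)) c)"
proof (rule f''_le0_imp_concave)
  show "convex {0..1::real}" by simp
  fix x :: real
  show "(P (Suc (Suc m)) c has_real_derivative real (Suc (Suc m)) * P (Suc m) (\<lambda>k. c (Suc k) - c k) x) (at x)"
    by (rule P_deriv)
  show "((\<lambda>x. real (Suc (Suc m)) * P (Suc m) (\<lambda>k. c (Suc k) - c k) x) has_real_derivative
      real (Suc (Suc m)) * (real (Suc m) * P m (\<lambda>k. (c (Suc (Suc k)) - c (Suc k)) - (c (Suc k) - c k)) x)) (at x)"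
    by (rule DERIV_cmult, rule P_deriv)
  assume "x \<in> {0..1}"
  hence "P m (\<lambda>k. (c (Suc (Suc k)) - c (Suc k)) - (c (Suc k) - c k)) x \<le> 0"
    unfolding P_def
    apply (intro sum_nonpos)
    apply (rule mult_nonpos_nonneg)
    using assms by (auto simp: bp_nonneg eval_nat_numeral) (smt (verit) assms)
  thus "real (Suc (Suc m)) * (real (Suc m) * P m (\<lambda>k. (c (Suc (Suc k)) - c (Suc k)) - (c (Suc k) - c k)) x) \<le> 0"
    by (simp add: mult_nonneg_nonpos)
qed
lemma floor_div_le: "(C::real) > 0 \<Longrightarrow> real_of_int \<lfloor>a * C\<rfloor> / C \<le> a"
  by (simp add: divide_le_eq)
lemma floor_div_gt: "(C::real) > 0 \<Longrightarrow> real_of_int \<lfloor>a * C\<rfloor> / C > a - 1 / C"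
proof -
  assume C: "C > 0"
  have "real_of_int \<lfloor>a * C\<rfloor> > a * C - 1" by linarith
  hence "real_of_int \<lfloor>a * C\<rfloor> / C > (a * C - 1) / C" using C by (simp add: divide_strict_right_mono)
  thus ?thesis using C by (simp add: diff_divide_distrib)
qed

theorem proposition3p2:
  fixes f \<Phi> :: "real \<Rightarrow> real" and n :: nat
  assumes "f 0 \<in> \<int>" and "f 1 \<in> \<int>"
    and "n \<ge> 2"
    and "\<And>k. k \<le> n - 2 \<Longrightarrow>
           \<Phi> (real (k + 2) / real n) - 2 * \<Phi> (real (k + 1) / real n) + \<Phi> (real k / real n)
             \<ge> 2 / real (n choose (k + 1))"
    and "concave_on {0..1} (\<lambda>x. f x + \<Phi> x)"
  shows "concave_on {0..1} (tilde_bernstein n f)"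
proof -
  obtain m where n: "n = Suc (Suc m)" using assms(3) by (metis add_2_eq_Suc le_Suc_ex)
  define c where "c k = real_of_int \<lfloor>f (real k / real n) * real (n choose k)\<rfloor> / real (n choose k)" for k
  have eq: "tilde_bernstein n f = P n c"
  proof
    fix x
    show "tilde_bernstein n f x = P n c x"
      unfolding tilde_bernstein_def P_def bp_def c_def
      by (rule sum.cong) auto
  qed
  have "concave_on {0..1} (P (Suc (Suc m)) c)"
  proof (rule P_concave)
    fix k assume k: "k \<le> m"
    define C where "C = real (n choose (k + 1))"
    have Cpos: "C > 0" unfolding C_def using k n zero_less_binomial[of "k+1" n] by (simp del: binomial_Suc_Suc)
    have Ck: "real (n choose k) > 0" "real (n choose (k+2)) > 0" using k n zero_less_binomial[of k n] zero_less_binomial[of "k+2" n] by (simp_all del: binomial_Suc_Suc)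
    have c0: "c k \<le> f (real k / real n)" unfolding c_def using floor_div_le[OF Ck(1)] by simp
    have c2: "c (k+2) \<le> f (real (k+2) / real n)" unfolding c_def using floor_div_le[OF Ck(2)] by simp
    have c1: "c (k+1) > f (real (k+1) / real n) - 1 / C" unfolding c_def C_def
      using floor_div_gt[OF Cpos[unfolded C_def]] by simp
    have phi: "\<Phi> (real (k + 2) / real n) - 2 * \<Phi> (real (k + 1) / real n) + \<Phi> (real k / real n) \<ge> 2 / C"
      unfolding C_def using assms(4)[of k] k n by simp
    have mid: "(1 - 1/2) * (f (real k / real n) + \<Phi> (real k / real n)) + 1/2 * (f (real (k+2) / real n) + \<Phi> (real (k+2) / real n))
       \<le> f ((1 - 1/2) *\<^sub>R (real k / real n) + (1/2) *\<^sub>R (real (k+2) / real n)) + \<Phi> ((1 - 1/2) *\<^sub>R (real k / real n) + (1/2) *\<^sub>R (real (k+2) / real n))"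
      by (rule concave_onD[OF assms(5)]) (use k n in auto)
    have pt: "(1 - 1/2) *\<^sub>R (real k / real n) + (1/2) *\<^sub>R (real (k+2) / real n) = real (k+1) / real n"
    proof -
      have "real n > 0" using n by simp
      thus ?thesis by (simp add: field_simps)
    qed
    have key: "\<And>a b d F0 F1 F2 G0 G1 G2 C::real. (1 - 1/2) * (F0 + G0) + 1/2 * (F2 + G2) \<le> F1 + G1 \<Longrightarrow>
      a \<le> F0 \<Longrightarrow> F1 - 1 / C < b \<Longrightarrow> d \<le> F2 \<Longrightarrow> 2 / C \<le> G2 - 2 * G1 + G0 \<Longrightarrow> d - 2 * b + a \<le> 0"
      by (simp add: field_simps)
    show "c (k + 2) - 2 * c (k + 1) + c k \<le> 0"
      by (rule key[OF mid[unfolded pt] c0 c1 c2 phi])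
  qed
  thus ?thesis using eq n by simp
qed
end
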